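(* Let $0<\alpha'<2/9$, $0<\beta'<1/4$, with $\tfrac98\alpha'\ne\beta'$ and $\alpha'\neq\beta'$. Let $\mathcal{S}$ be the separability of the label-augmented model and $\mathcal{S}^{(u)}$ that of the self-supervised model. Then $\mathcal{S}-\mathcal{S}^{(u)}>0$, i.e., incorporating ID label information increases the separation between ID nodes and the semantic OOD node.
   Context: Two toy five-node models with nodes, in order: 1 = angel in sketch (ID, class angel), 2 = tiger in sketch (ID, class tiger), 3 = angel in painting (covariate OOD), 4 = tiger in painting (covariate OOD), 5 = panda (semantic OOD); parameters $\alpha'=\alpha/\rho$, $\beta'=\beta/\rho$ (first-order approximation of an augmentation graph with $\eta_u=5,\eta_l=1$). Label-augmented model: $M=\begin{pmatrix}1-2\beta'-\frac32\alpha'&2\beta'&\frac{3}{\sqrt2}\alpha'&0&0\\2\beta'&1-2\beta'-\frac32\alpha'&0&\frac3{\sqrt2}\alpha'&0\\\frac3{\sqrt2}\alpha'&0&1-2\beta'-3\alpha'&2\beta'&0\\0&\frac3{\sqrt2}\alpha'&2\beta'&1-2\beta'-3\alpha'&0\\0&0&0&0&1\end{pmatrix}$, $C=7+12\beta'+12\alpha'$, $\Delta=\sqrt{C}\,\mathrm{diag}\big(\tfrac{1}{\sqrt2}(1-\beta'-\tfrac34\alpha'),\tfrac1{\sqrt2}(1-\beta'-\tfrac34\alpha'),1-\beta'-\tfrac32\alpha',1-\beta'-\tfrac32\alpha',1\big)$. Self-supervised model: $M_u=\begin{pmatrix}1-2\beta'-2\alpha'&2\beta'&2\alpha'&0&0\\2\beta'&1-2\beta'-2\alpha'&0&2\alpha'&0\\2\alpha'&0&1-2\beta'-2\alpha'&2\beta'&0\\0&2\alpha'&2\beta'&1-2\beta'-2\alpha'&0\\0&0&0&0&1\end{pmatrix}$,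 $C_u=5+8\beta'+8\alpha'$, $\Delta_u=\sqrt{C_u}\,\mathrm{diag}(1-\beta'-\alpha',1-\beta'-\alpha',1-\beta'-\alpha',1-\beta'-\alpha',1)$. For a model $(M,\Delta)$: let $V$ have orthonormal columns spanning eigenvectors for the three largest eigenvalues of $M$, $\Sigma$ the diagonal matrix of those eigenvalues, $Z=\Delta V\Sigma^{1/2}$ with rows $z_i^\top$, and separability $\tfrac12(\|z_1-z_5\|_2^2+\|z_2-z_5\|_2^2)$. *)

theory Defs
  imports Complex_Main
begin

text \<open>Conventions: nodes 1..5 of the paper are indexed 0..4 here. A 5x5 matrix is a
function nat => nat => real (only entries with indices < 5 matter), a vector in R^5 is a
function nat => real (only indices < 5 matter). The parameters a, b stand for
alpha' and beta'.\<close>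

definition mv5 :: "(nat \<Rightarrow> nat \<Rightarrow> real) \<Rightarrow> (nat \<Rightarrow> real) \<Rightarrow> nat \<Rightarrow> real" where
  "mv5 M v i = (\<Sum>j<5. M i j * v j)"

definition dot5 :: "(nat \<Rightarrow> real) \<Rightarrow> (nat \<Rightarrow> real) \<Rightarrow> real" where
  "dot5 u v = (\<Sum>i<5. u i * v i)"

definition M_lab :: "real \<Rightarrow> real \<Rightarrow> nat \<Rightarrow> nat \<Rightarrow> real" where
  "M_lab a b i j =
    [[1 - 2*b - 3/2*a, 2*b, 3/sqrt 2*a, 0, 0],
     [2*b, 1 - 2*b - 3/2*a, 0, 3/sqrt 2*a, 0],
     [3/sqrt 2*a, 0, 1 - 2*b - 3*a, 2*b, 0],
     [0, 3/sqrt 2*a, 2*b, 1 - 2*b - 3*a, 0],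
     [0, 0, 0, 0, 1]] ! i ! j"

definition C_lab :: "real \<Rightarrow> real \<Rightarrow> real" where
  "C_lab a b = 7 + 12*b + 12*a"

definition D_lab :: "real \<Rightarrow> real \<Rightarrow> nat \<Rightarrow> real" where
  "D_lab a b i = sqrt (C_lab a b) *
    [1/sqrt 2*(1 - b - 3/4*a), 1/sqrt 2*(1 - b - 3/4*a), 1 - b - 3/2*a, 1 - b - 3/2*a, 1] ! i"

definition M_self :: "real \<Rightarrow> real \<Rightarrow> nat \<Rightarrow> nat \<Rightarrow> real" where
  "M_self a b i j =
    [[1 - 2*b - 2*a, 2*b, 2*a, 0, 0],
     [2*b, 1 - 2*b - 2*a, 0, 2*a, 0],
     [2*a, 0, 1 - 2*b - 2*a, 2*b, 0],
     [0, 2*a, 2*b, 1 - 2*b - 2*a, 0],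
     [0, 0, 0, 0, 1]] ! i ! j"

definition C_self :: "real \<Rightarrow> real \<Rightarrow> real" where
  "C_self a b = 5 + 8*b + 8*a"

definition D_self :: "real \<Rightarrow> real \<Rightarrow> nat \<Rightarrow> real" where
  "D_self a b i = sqrt (C_self a b) *
    [1 - b - a, 1 - b - a, 1 - b - a, 1 - b - a, 1] ! i"

text \<open>V (5x3, column k = V i k) has orthonormal columns that are eigenvectors of M for the
three largest eigenvalues lam 0, lam 1, lam 2 (counted with multiplicity): they are the first
three vectors of an orthonormal eigenbasis U 0..U 4 of R^5 whose eigenvalues mu are sorted
in non-increasing order.\<close>
definition top3_eig :: "(nat \<Rightarrow> nat \<Rightarrow> real) \<Rightarrow> (nat \<Rightarrow> nat \<Rightarrow> real) \<Rightarrow> (nat \<Rightarrow> real) \<Rightarrow> bool" where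
  "top3_eig M V lam \<longleftrightarrow>
    (\<exists>(U :: nat \<Rightarrow> nat \<Rightarrow> real) (mu :: nat \<Rightarrow> real).
       (\<forall>k<5. \<forall>l<5. dot5 (U k) (U l) = (if k = l then 1 else 0)) \<and>
       (\<forall>k<5. \<forall>i<5. mv5 M (U k) i = mu k * U k i) \<and>
       (\<forall>k l. k \<le> l \<and> l < 5 \<longrightarrow> mu l \<le> mu k) \<and>
       (\<forall>k<3. lam k = mu k \<and> (\<forall>i<5. V i k = U k i)))"

definition Zmat :: "(nat \<Rightarrow> real) \<Rightarrow> (nat \<Rightarrow> nat \<Rightarrow> real) \<Rightarrow> (nat \<Rightarrow> real) \<Rightarrow> nat \<Rightarrow> nat \<Rightarrow> real" where
  "Zmat D V lam i k = D i * V i k * sqrt (lam k)"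

definition separability :: "(nat \<Rightarrow> real) \<Rightarrow> (nat \<Rightarrow> nat \<Rightarrow> real) \<Rightarrow> (nat \<Rightarrow> real) \<Rightarrow> real" where
  "separability D V lam =
    1/2 * ((\<Sum>k<3. (Zmat D V lam 0 k - Zmat D V lam 4 k)^2) +
           (\<Sum>k<3. (Zmat D V lam 1 k - Zmat D V lam 4 k)^2))"

end

theory Submission
  imports Defs
begin


lemma sum5: "(\<Sum>j<(5::nat). f j) = f 0 + f 1 + f 2 + f 3 + (f 4 :: real)"
  by (simp add: eval_nat_numeral)

lemma col2:
  fixes p0 p1 q0 q1 :: real
  assumes "p0^2 + p1^2 = 1" "q0^2+q1^2 = 1" "p0*q0 + p1*q1 = 0"
  shows "p0^2 + q0^2 = 1 \<and> p1^2 + q1^2 = 1 \<and> p0*p1 + q0*q1 = 0"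
proof -
  define d where "d = p0*q1 - p1*q0"
  have d2: "d^2 = 1"
  proof -
    have "d^2 = (p0^2+p1^2)*(q0^2+q1^2) - (p0*q0+p1*q1)^2" unfolding d_def by algebra
    thus ?thesis using assms by simp
  qed
  have hq0: "q0 = - d * p1"
  proof -
    have "q0 = q0*(p0^2+p1^2)" using assms by simp
    also have "\<dots> = p0*(p0*q0+p1*q1) - d*p1" unfolding d_def by algebra
    finally show ?thesis using assms by simp
  qed
  have hq1: "q1 = d * p0"
  proof -
    have "q1 = q1*(p0^2+p1^2)" using assms by simp
    also have "\<dots> = p1*(p0*q0+p1*q1) + d*p0" unfolding d_def by algebra
    finally show ?thesis using assms by simp
  qed
  have "p0^2 + q0^2 = p0^2 + d^2*p1^2" using hq0 by (simp add: power_mult_distrib)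
  moreover have "p1^2 + q1^2 = p1^2 + d^2*p0^2" using hq1 by (simp add: power_mult_distrib)
  moreover have "p0*p1 + q0*q1 = p0*p1*(1 - d^2)" using hq0 hq1 by (simp add: algebra_simps power2_eq_square)
  ultimately show ?thesis using d2 assms by (simp add: add.commute)
qed

lemma no3:
  fixes p0 p1 q0 q1 r0 r1 :: real
  assumes "p0^2 + p1^2 = 1" "q0^2+q1^2 = 1" "p0*q0 + p1*q1 = 0"
    "r0^2+r1^2 = 1" "p0*r0+p1*r1 = 0" "q0*r0+q1*r1 = 0"
  shows False
proof -
  from col2[OF assms(1-3)] have c: "p0^2 + q0^2 = 1" "p1^2 + q1^2 = 1" "p0*p1 + q0*q1 = 0" by auto
  have "r0 = r0*(p0^2+q0^2) + r1*(p0*p1+q0*q1)" using c by simp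
  also have "\<dots> = p0*(p0*r0+p1*r1) + q0*(q0*r0+q1*r1)" by algebra
  finally have "r0 = 0" using assms by simp
  have "r1 = r0*(p0*p1+q0*q1) + r1*(p1^2+q1^2)" using c by simp
  also have "\<dots> = p1*(p0*r0+p1*r1) + q1*(q0*r0+q1*r1)" by algebra
  finally have "r1 = 0" using assms by simp
  with \<open>r0 = 0\<close> assms(4) show False by simp
qed




lemma top3_generic:
  fixes c :: "nat\<Rightarrow>nat\<Rightarrow>real" and mu nu :: "nat \<Rightarrow> real"
  assumes orth: "\<And>k l. k<5 \<Longrightarrow> l<5 \<Longrightarrow> (\<Sum>j<5. c k j * c l j) = (if k=l then 1 else 0)"
    and eig: "\<And>k j. k<5 \<Longrightarrow> j<5 \<Longrightarrow> (nu j - mu k) * c k j = 0"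
    and sorted: "\<And>k l. k \<le> l \<Longrightarrow> l < 5 \<Longrightarrow> mu l \<le> mu k"
    and nu: "nu 0 = 1" "nu 1 = 1" "nu 2 < 1" "nu 3 < nu 2" "nu 4 < nu 3"
  shows "mu 0 = 1 \<and> mu 1 = 1 \<and> mu 2 = nu 2 \<and> c 0 2 = 0 \<and> c 0 3 = 0 \<and> c 0 4 = 0 \<and>
    c 1 2 = 0 \<and> c 1 3 = 0 \<and> c 1 4 = 0 \<and> c 2 0 = 0 \<and> c 2 1 = 0 \<and> c 2 3 = 0 \<and> c 2 4 = 0 \<and>
    (c 2 2)^2 = 1 \<and> (c 0 1)^2 + (c 1 1)^2 = 1 \<and> (c 0 0)^2 + (c 1 0)^2 = 1 \<and>
    c 0 0 * c 0 1 + c 1 0 * c 1 1 = 0"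
proof -
  have z: "\<And>k j. k<5 \<Longrightarrow> j<5 \<Longrightarrow> nu j \<noteq> mu k \<Longrightarrow> c k j = 0"
    using eig by fastforce
  have unit: "\<And>k. k<5 \<Longrightarrow> (c k 0)^2 + (c k 1)^2 + (c k 2)^2 + (c k 3)^2 + (c k 4)^2 = 1"
    using orth by (simp add: sum5 power2_eq_square)
  have dotk: "\<And>k l. k<5 \<Longrightarrow> l<5 \<Longrightarrow> k\<noteq>l \<Longrightarrow>
     c k 0 * c l 0 + c k 1 * c l 1 + c k 2 * c l 2 + c k 3 * c l 3 + c k 4 * c l 4 = 0"
    using orth by (simp add: sum5)
  have inset: "mu k = 1 \<or> mu k = nu 2 \<or> mu k = nu 3 \<or> mu k = nu 4" if k: "k<5" for k
  proof (rule ccontr)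
    assume "\<not> ?thesis"
    hence "c k 0 = 0" "c k 1 = 0" "c k 2 = 0" "c k 3 = 0" "c k 4 = 0"
      using z[OF k] nu by auto
    with unit[OF k] show False by simp
  qed
  have z1: "c k 2 = 0 \<and> c k 3 = 0 \<and> c k 4 = 0" if "k<5" "mu k = 1" for k
    using z[OF that(1)] that nu by auto
  have single: False if "k<5" "l<5" "k\<noteq>l" "mu k = mu l" "mu k = nu 2 \<or> mu k = nu 3 \<or> mu k = nu 4" for k l
  proof -
    have zk: "\<And>j. j<5 \<Longrightarrow> nu j \<noteq> mu k \<Longrightarrow> c k j = 0" "\<And>j. j<5 \<Longrightarrow> nu j \<noteq> mu k \<Longrightarrow> c l j = 0"
      using z that by auto
    from that(5) show False
    proof (elim disjE)
      assume h: "mu k = nu 2"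
      have "c k 0 = 0" "c k 1 = 0" "c k 3 = 0" "c k 4 = 0" "c l 0 = 0" "c l 1 = 0" "c l 3 = 0" "c l 4 = 0"
        using zk h nu by auto
      with unit[OF that(1)] unit[OF that(2)] dotk[OF that(1-3)]
      have "(c k 2)^2 = 1" "(c l 2)^2 = 1" "c k 2 * c l 2 = 0" by auto
      thus False by (metis mult_eq_0_iff power2_eq_square zero_neq_one)
    next
      assume h: "mu k = nu 3"
      have "c k 0 = 0" "c k 1 = 0" "c k 2 = 0" "c k 4 = 0" "c l 0 = 0" "c l 1 = 0" "c l 2 = 0" "c l 4 = 0"
        using zk h nu by auto
      with unit[OF that(1)] unit[OF that(2)] dotk[OF that(1-3)]
      have "(c k 3)^2 = 1" "(c l 3)^2 = 1" "c k 3 * c l 3 = 0" by auto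
      thus False by (metis mult_eq_0_iff power2_eq_square zero_neq_one)
    next
      assume h: "mu k = nu 4"
      have "c k 0 = 0" "c k 1 = 0" "c k 2 = 0" "c k 3 = 0" "c l 0 = 0" "c l 1 = 0" "c l 2 = 0" "c l 3 = 0"
        using zk h nu by auto
      with unit[OF that(1)] unit[OF that(2)] dotk[OF that(1-3)]
      have "(c k 4)^2 = 1" "(c l 4)^2 = 1" "c k 4 * c l 4 = 0" by auto
      thus False by (metis mult_eq_0_iff power2_eq_square zero_neq_one)
    qed
  qed
  have le1: "mu k \<le> 1" if "k<5" for k using inset[OF that] nu by auto
  have s01: "mu 1 \<le> mu 0" "mu 2 \<le> mu 1" "mu 3 \<le> mu 2" "mu 4 \<le> mu 3" using sorted by auto
  have mu2: "mu 2 \<noteq> 1"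
  proof
    assume h: "mu 2 = 1"
    hence h01: "mu 0 = 1" "mu 1 = 1" using s01 le1[of 0] le1[of 1] by auto
    have a: "c 0 2 = 0 \<and> c 0 3 = 0 \<and> c 0 4 = 0" "c 1 2 = 0 \<and> c 1 3 = 0 \<and> c 1 4 = 0"
       "c 2 2 = 0 \<and> c 2 3 = 0 \<and> c 2 4 = 0" using z1 h h01 by auto
    show False
      apply (rule no3[of "c 0 0" "c 0 1" "c 1 0" "c 1 1" "c 2 0" "c 2 1"])
      using a unit[of 0] unit[of 1] unit[of 2] dotk[of 0 1] dotk[of 0 2] dotk[of 1 2] by auto
  qed
  have i2: "mu 2 = nu 2 \<or> mu 2 = nu 3 \<or> mu 2 = nu 4" using inset[of 2] mu2 by auto
  have i3: "mu 3 = nu 2 \<or> mu 3 = nu 3 \<or> mu 3 = nu 4" using inset[of 3] mu2 s01 le1[of 2] by auto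
  have i4: "mu 4 = nu 2 \<or> mu 4 = nu 3 \<or> mu 4 = nu 4" using inset[of 4] mu2 s01 le1[of 2] by auto
  have n23: "mu 2 \<noteq> mu 3" using single[of 2 3] i2 by auto
  have n34: "mu 3 \<noteq> mu 4" using single[of 3 4] i3 by auto
  have m2: "mu 2 = nu 2" using i2 i3 i4 n23 n34 s01 nu by auto
  have m1: "mu 1 = 1" using inset[of 1] single[of 1 2] m2 s01 nu by force
  have m0: "mu 0 = 1" using le1[of 0] s01 m1 by auto
  have a: "c 0 2 = 0 \<and> c 0 3 = 0 \<and> c 0 4 = 0" "c 1 2 = 0 \<and> c 1 3 = 0 \<and> c 1 4 = 0"
    using z1 m0 m1 by auto
  have b: "c 2 0 = 0" "c 2 1 = 0" "c 2 3 = 0" "c 2 4 = 0" using z[of 2] m2 nu by auto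
  have c22: "(c 2 2)^2 = 1" using unit[of 2] b by simp
  have u0: "(c 0 0)^2 + (c 0 1)^2 = 1" "(c 1 0)^2 + (c 1 1)^2 = 1" "c 0 0 * c 1 0 + c 0 1 * c 1 1 = 0"
    using unit[of 0] unit[of 1] dotk[of 0 1] a by auto
  from col2[OF u0] have "(c 0 0)^2 + (c 1 0)^2 = 1 \<and> (c 0 1)^2 + (c 1 1)^2 = 1 \<and> c 0 0 * c 0 1 + c 1 0 * c 1 1 = 0" .
  thus ?thesis using m0 m1 m2 a b c22 by auto
qed




lemma from_top3:
  fixes F :: "nat \<Rightarrow> (nat \<Rightarrow> real) \<Rightarrow> real"
  assumes top: "top3_eig M V lam"
    and dotF: "\<And>u v. dot5 u v = (\<Sum>j<5. F j u * F j v)"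
    and eigF: "\<And>u m j. (\<forall>i<5. mv5 M u i = m * u i) \<Longrightarrow> j<5 \<Longrightarrow> (nu j - m) * F j u = 0"
    and nu: "nu 0 = 1" "nu 1 = 1" "nu 2 < 1" "nu 3 < nu 2" "nu 4 < nu 3"
  shows "\<exists>U. (\<forall>k<3. \<forall>i<5. V i k = U k i) \<and> lam 0 = 1 \<and> lam 1 = 1 \<and> lam 2 = nu 2 \<and>
    F 2 (U 0) = 0 \<and> F 3 (U 0) = 0 \<and> F 4 (U 0) = 0 \<and>
    F 2 (U 1) = 0 \<and> F 3 (U 1) = 0 \<and> F 4 (U 1) = 0 \<and>
    F 0 (U 2) = 0 \<and> F 1 (U 2) = 0 \<and> F 3 (U 2) = 0 \<and> F 4 (U 2) = 0 \<and>
    (F 2 (U 2))^2 = 1 \<and> (F 1 (U 0))^2 + (F 1 (U 1))^2 = 1 \<and> (F 0 (U 0))^2 + (F 0 (U 1))^2 = 1 \<and>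
    F 0 (U 0) * F 1 (U 0) + F 0 (U 1) * F 1 (U 1) = 0"
proof -
  from top obtain U mu where
    o: "\<forall>k<5. \<forall>l<5. dot5 (U k) (U l) = (if k = l then 1 else 0)" and
    e: "\<forall>k<5. \<forall>i<5. mv5 M (U k) i = mu k * U k i" and
    s: "\<forall>k l. k \<le> l \<and> l < 5 \<longrightarrow> mu l \<le> mu k" and
    l: "\<forall>k<3. lam k = mu k \<and> (\<forall>i<5. V i k = U k i)"
    unfolding top3_eig_def by blast
  have g: "mu 0 = 1 \<and> mu 1 = 1 \<and> mu 2 = nu 2 \<and> (\<lambda>k j. F j (U k)) 0 2 = 0 \<and> (\<lambda>k j. F j (U k)) 0 3 = 0 \<and> (\<lambda>k j. F j (U k)) 0 4 = 0 \<and>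
    (\<lambda>k j. F j (U k)) 1 2 = 0 \<and> (\<lambda>k j. F j (U k)) 1 3 = 0 \<and> (\<lambda>k j. F j (U k)) 1 4 = 0 \<and> (\<lambda>k j. F j (U k)) 2 0 = 0 \<and> (\<lambda>k j. F j (U k)) 2 1 = 0 \<and> (\<lambda>k j. F j (U k)) 2 3 = 0 \<and> (\<lambda>k j. F j (U k)) 2 4 = 0 \<and>
    ((\<lambda>k j. F j (U k)) 2 2)^2 = 1 \<and> ((\<lambda>k j. F j (U k)) 0 1)^2 + ((\<lambda>k j. F j (U k)) 1 1)^2 = 1 \<and> ((\<lambda>k j. F j (U k)) 0 0)^2 + ((\<lambda>k j. F j (U k)) 1 0)^2 = 1 \<and>
    (\<lambda>k j. F j (U k)) 0 0 * (\<lambda>k j. F j (U k)) 0 1 + (\<lambda>k j. F j (U k)) 1 0 * (\<lambda>k j. F j (U k)) 1 1 = 0"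
  proof (rule top3_generic[where mu=mu and nu=nu])
    show "\<And>k l. k<5 \<Longrightarrow> l<5 \<Longrightarrow> (\<Sum>j<5. F j (U k) * F j (U l)) = (if k=l then 1 else 0)"
      using o dotF by simp
    show "\<And>k j. k<5 \<Longrightarrow> j<5 \<Longrightarrow> (nu j - mu k) * F j (U k) = 0"
      using e eigF by blast
    show "\<And>k l. k \<le> l \<Longrightarrow> l < 5 \<Longrightarrow> mu l \<le> mu k" using s by blast
  qed (use nu in auto)
  show ?thesis
    apply (rule exI[of _ U])
    using g l by auto
qed

lemma mself_eqs:
  assumes "\<forall>i<5. mv5 (M_self a b) u i = m * u i"
  shows "(1-2*b-2*a)*u 0 + 2*b*u 1 + 2*a*u 2 = m * u 0"
    "2*b*u 0 + (1-2*b-2*a)*u 1 + 2*a*u 3 = m * u 1"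
    "2*a*u 0 + (1-2*b-2*a)*u 2 + 2*b*u 3 = m * u 2"
    "2*a*u 1 + 2*b*u 2 + (1-2*b-2*a)*u 3 = m * u 3"
    "u 4 = m * u 4"
  using assms[rule_format, of 0] assms[rule_format, of 1] assms[rule_format, of 2]
    assms[rule_format, of 3] assms[rule_format, of 4]
  by (simp_all add: mv5_def sum5 M_self_def numeral_eq_Suc)




lemma sep_formula:
  fixes D :: "nat \<Rightarrow> real"
  assumes "lam 0 = 1" "lam 1 = 1" "lam 2 = n" "0 \<le> n"
   "V 0 0 = x 0 * p" "V 0 1 = x 1 * p" "V 1 0 = x 0 * p" "V 1 1 = x 1 * p" "V 4 0 = y 0" "V 4 1 = y 1"
   "V 0 2 = z*q0" "V 1 2 = z*q1" "V 4 2 = 0" "z^2=1"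
   "(x 0)^2 + (x 1)^2 = 1" "(y 0)^2+(y 1)^2 = 1" "x 0 * y 0 + x 1 * y 1 = 0"
  shows "separability D V lam = 1/2*((D 0)^2*(p^2+n*q0^2) + (D 1)^2*(p^2+n*q1^2)) + (D 4)^2"
proof -
  have sq: "(sqrt n)^2 = n" using assms(4) by simp
  have "separability D V lam = 1/2*(
     (D 0 * x 0 * p - D 4 * y 0)^2 + (D 0 * x 1 * p - D 4 * y 1)^2 + (D 0 * z * q0)^2 * (sqrt n)^2 +
     (D 1 * x 0 * p - D 4 * y 0)^2 + (D 1 * x 1 * p - D 4 * y 1)^2 + (D 1 * z * q1)^2 * (sqrt n)^2)"
    unfolding separability_def Zmat_def using assms(1-13)
    by (simp add: eval_nat_numeral power_mult_distrib algebra_simps)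
  also have "\<dots> = 1/2*((D 0)^2*(p^2+n*q0^2) + (D 1)^2*(p^2+n*q1^2)) + (D 4)^2"
    unfolding sq using assms(14-17) by algebra
  finally show ?thesis .
qed




definition Fself :: "bool \<Rightarrow> nat \<Rightarrow> (nat \<Rightarrow> real) \<Rightarrow> real" where
  "Fself sw j u = (if j = 0 then u 4 else if j = 1 then (u 0 + u 1 + u 2 + u 3)/2
     else if j = 2 then (if sw then (u 0 - u 1 + u 2 - u 3)/2 else (u 0 + u 1 - u 2 - u 3)/2)
     else if j = 3 then (if sw then (u 0 + u 1 - u 2 - u 3)/2 else (u 0 - u 1 + u 2 - u 3)/2)
     else (u 0 - u 1 - u 2 + u 3)/2)"

definition nuself :: "real \<Rightarrow> real \<Rightarrow> bool \<Rightarrow> nat \<Rightarrow> real" where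
  "nuself a b sw j = (if j \<le> 1 then 1 else if j = 2 then (if sw then 1 - 4*b else 1 - 4*a)
     else if j = 3 then (if sw then 1 - 4*a else 1 - 4*b) else 1 - 4*a - 4*b)"

lemma less5: "(j::nat) < 5 \<longleftrightarrow> j = 0 \<or> j = 1 \<or> j = 2 \<or> j = 3 \<or> j = 4" by auto

lemma self_dot: "dot5 u v = (\<Sum>j<5. Fself sw j u * Fself sw j v)"
  by (cases sw) (simp_all add: dot5_def sum5 Fself_def field_simps)

lemma self_eig:
  assumes "\<forall>i<5. mv5 (M_self a b) u i = m * u i" "j < 5"
  shows "(nuself a b sw j - m) * Fself sw j u = 0"
proof -
  note e = mself_eqs[OF assms(1)]
  have s1: "u 0 + u 1 + u 2 + u 3 = m * (u 0 + u 1 + u 2 + u 3)" using e by (simp add: algebra_simps; linarith)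
  have sa: "(1-4*a)*(u 0 + u 1 - u 2 - u 3) = m * (u 0 + u 1 - u 2 - u 3)" using e by (simp add: algebra_simps; linarith)
  have sb: "(1-4*b)*(u 0 - u 1 + u 2 - u 3) = m * (u 0 - u 1 + u 2 - u 3)" using e by (simp add: algebra_simps; linarith)
  have sab: "(1-4*a-4*b)*(u 0 - u 1 - u 2 + u 3) = m * (u 0 - u 1 - u 2 + u 3)" using e by (simp add: algebra_simps; linarith)
  show ?thesis using assms(2) unfolding less5
    by (elim disjE; cases sw) (simp_all add: nuself_def Fself_def algebra_simps e(5)[symmetric] ;
         use s1 sa sb sab in \<open>simp add: algebra_simps\<close>)+
qed




lemma self_inv:
  "u 0 = (Fself sw 1 u + Fself sw 2 u + Fself sw 3 u + Fself sw 4 u)/2"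
  "u 1 = (Fself sw 1 u - Fself sw 4 u)/2 + (if sw then Fself sw 3 u - Fself sw 2 u else Fself sw 2 u - Fself sw 3 u)/2"
  "u 4 = Fself sw 0 u"
  by (cases sw; simp add: Fself_def field_simps)+

lemma self_sep:
  assumes "0<a" "a<1/4" "0<b" "b<1/4" "a\<noteq>b" "top3_eig (M_self a b) V lam"
  shows "separability (D_self a b) V lam = C_self a b * ((1-a-b)^2*(2 - 4*min a b)/4 + 1)"
proof -
  define sw where "sw = (b < a)"
  have nu: "nuself a b sw 0 = 1" "nuself a b sw 1 = 1" "nuself a b sw 2 < 1"
     "nuself a b sw 3 < nuself a b sw 2" "nuself a b sw 4 < nuself a b sw 3"
    using assms(1-5) by (auto simp: nuself_def sw_def)
  obtain U where
    VU: "\<forall>k<3. \<forall>i<5. V i k = U k i" and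
    R: "lam 0 = 1 \<and> lam 1 = 1 \<and> lam 2 = nuself a b sw 2 \<and>
    Fself sw 2 (U 0) = 0 \<and> Fself sw 3 (U 0) = 0 \<and> Fself sw 4 (U 0) = 0 \<and>
    Fself sw 2 (U 1) = 0 \<and> Fself sw 3 (U 1) = 0 \<and> Fself sw 4 (U 1) = 0 \<and>
    Fself sw 0 (U 2) = 0 \<and> Fself sw 1 (U 2) = 0 \<and> Fself sw 3 (U 2) = 0 \<and> Fself sw 4 (U 2) = 0 \<and>
    (Fself sw 2 (U 2))^2 = 1 \<and> (Fself sw 1 (U 0))^2 + (Fself sw 1 (U 1))^2 = 1 \<and> (Fself sw 0 (U 0))^2 + (Fself sw 0 (U 1))^2 = 1 \<and>
    Fself sw 0 (U 0) * Fself sw 1 (U 0) + Fself sw 0 (U 1) * Fself sw 1 (U 1) = 0"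
    using from_top3[OF assms(6) self_dot self_eig nu] by blast
  have n0: "0 \<le> nuself a b sw 2" using assms(1-5) by (auto simp: nuself_def sw_def)
  have nmin: "nuself a b sw 2 = 1 - 4 * min a b" using assms(1-5) by (auto simp: nuself_def sw_def)
  have "separability (D_self a b) V lam =
     1/2*((D_self a b 0)^2*((1/2)^2+nuself a b sw 2*(1/2)^2) + (D_self a b 1)^2*((1/2)^2+nuself a b sw 2*(if sw then -1/2 else 1/2)^2)) + (D_self a b 4)^2"
  proof (rule sep_formula[where x="\<lambda>k. Fself sw 1 (U k)" and y="\<lambda>k. Fself sw 0 (U k)" and z="Fself sw 2 (U 2)"])
    show "V 0 0 = Fself sw 1 (U 0) * (1/2)" "V 0 1 = Fself sw 1 (U 1) * (1/2)"
      "V 1 0 = Fself sw 1 (U 0) * (1/2)" "V 1 1 = Fself sw 1 (U 1) * (1/2)"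
      "V 4 0 = Fself sw 0 (U 0)" "V 4 1 = Fself sw 0 (U 1)"
      "V 0 2 = Fself sw 2 (U 2) * (1/2)" "V 1 2 = Fself sw 2 (U 2) * (if sw then -1/2 else 1/2)"
      "V 4 2 = 0"
      using VU R self_inv[of "U 0" sw] self_inv[of "U 1" sw] self_inv[of "U 2" sw] by auto
  qed (use R n0 in \<open>auto simp: mult.commute\<close>)
  also have "\<dots> = C_self a b * ((1-a-b)^2*(2 - 4*min a b)/4 + 1)"
  proof -
    have C: "0 \<le> C_self a b" using assms by (simp add: C_self_def)
    have DD: "(D_self a b 0)^2 = C_self a b * (1-b-a)^2" "(D_self a b 1)^2 = C_self a b * (1-b-a)^2"
      "(D_self a b 4)^2 = C_self a b"
      using C by (simp_all add: D_self_def power_mult_distrib)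
    show ?thesis unfolding nmin DD by (simp add: field_simps power2_eq_square)
  qed
  finally show ?thesis .
qed




definition Glab :: "bool \<Rightarrow> nat \<Rightarrow> (nat \<Rightarrow> real) \<Rightarrow> real" where
  "Glab sw j u = (if j = 0 then u 4 else if j = 1 then 2*(u 0 + u 1) + sqrt 2*(u 2 + u 3)
     else if j = 2 then (if sw then 2*(u 0 - u 1) + sqrt 2*(u 2 - u 3) else (u 0 + u 1) - sqrt 2*(u 2 + u 3))
     else if j = 3 then (if sw then (u 0 + u 1) - sqrt 2*(u 2 + u 3) else 2*(u 0 - u 1) + sqrt 2*(u 2 - u 3))
     else (u 0 - u 1) - sqrt 2*(u 2 - u 3))"

definition wlab :: "bool \<Rightarrow> nat \<Rightarrow> real" where
  "wlab sw j = (if j = 0 then 1 else if j = 1 then 1/12 else if j = 2 then (if sw then 1/12 else 1/6)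
     else if j = 3 then (if sw then 1/6 else 1/12) else 1/6)"

definition Flab :: "bool \<Rightarrow> nat \<Rightarrow> (nat \<Rightarrow> real) \<Rightarrow> real" where
  "Flab sw j u = sqrt (wlab sw j) * Glab sw j u"

definition nulab :: "real \<Rightarrow> real \<Rightarrow> bool \<Rightarrow> nat \<Rightarrow> real" where
  "nulab a b sw j = (if j \<le> 1 then 1 else if j = 2 then (if sw then 1 - 4*b else 1 - 9/2*a)
     else if j = 3 then (if sw then 1 - 9/2*a else 1 - 4*b) else 1 - 4*b - 9/2*a)"

lemma sq_help: "0 \<le> (x::real) \<Longrightarrow> sqrt x * a * (sqrt x * b) = x * (a * b)"
proof -
  assume "0 \<le> x"
  have "sqrt x * a * (sqrt x * b) = (sqrt x * sqrt x)*(a*b)" by (simp add: mult_ac)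
  thus ?thesis using \<open>0 \<le> x\<close> by simp
qed

lemma ring_id: "(2*(u 0 + u 1) + s*(u 2 + u 3))*(2*(v 0 + v 1) + s*(v 2 + v 3))
  + 2*(((u 0 + u 1) - s*(u 2 + u 3))*((v 0 + v 1) - s*(v 2 + v 3)))
  + (2*(u 0 - u 1) + s*(u 2 - u 3))*(2*(v 0 - v 1) + s*(v 2 - v 3))
  + 2*(((u 0 - u 1) - s*(u 2 - u 3))*((v 0 - v 1) - s*(v 2 - v 3)))
  = 12*(u 0 * v 0 + u 1 * v 1) + 6*(s*s)*(u 2 * v 2 + u 3 * v 3::real)"
  by algebra

lemma lab_dot: "dot5 u v = (\<Sum>j<5. Flab sw j u * Flab sw j v)"
proof -
  have w: "wlab sw j \<ge> 0" for j by (simp add: wlab_def)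
  have "(\<Sum>j<5. Flab sw j u * Flab sw j v) = (\<Sum>j<5. wlab sw j * (Glab sw j u * Glab sw j v))"
    unfolding Flab_def using w by (intro sum.cong refl sq_help)
  also have "\<dots> = u 4 * v 4 + (Glab False 1 u * Glab False 1 v + 2 * (Glab False 2 u * Glab False 2 v)
      + Glab False 3 u * Glab False 3 v + 2 * (Glab False 4 u * Glab False 4 v)) / 12"
    by (cases sw) (simp_all add: sum5 Glab_def wlab_def)
  also have "Glab False 1 u * Glab False 1 v + 2 * (Glab False 2 u * Glab False 2 v)
      + Glab False 3 u * Glab False 3 v + 2 * (Glab False 4 u * Glab False 4 v)
     = 12*(u 0 * v 0 + u 1 * v 1) + 6*(sqrt 2 * sqrt 2)*(u 2 * v 2 + u 3 * v 3)"
  proof -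
    have g: "Glab False 1 u = 2*(u 0 + u 1) + sqrt 2*(u 2 + u 3)" "Glab False 1 v = 2*(v 0 + v 1) + sqrt 2*(v 2 + v 3)"
      "Glab False 2 u = (u 0 + u 1) - sqrt 2*(u 2 + u 3)" "Glab False 2 v = (v 0 + v 1) - sqrt 2*(v 2 + v 3)"
      "Glab False 3 u = 2*(u 0 - u 1) + sqrt 2*(u 2 - u 3)" "Glab False 3 v = 2*(v 0 - v 1) + sqrt 2*(v 2 - v 3)"
      "Glab False 4 u = (u 0 - u 1) - sqrt 2*(u 2 - u 3)" "Glab False 4 v = (v 0 - v 1) - sqrt 2*(v 2 - v 3)"
      by (simp_all add: Glab_def)
    show ?thesis unfolding g by (rule ring_id)
  qed
  also have "sqrt 2 * sqrt 2 = (2::real)" by simp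
  finally show ?thesis by (simp add: dot5_def sum5)
qed

lemma lab_inv:
  "6 * u 0 = Glab sw 1 u + Glab sw 2 u + Glab sw 3 u + Glab sw 4 u"
  "6 * u 1 = Glab sw 1 u - Glab sw 4 u + (if sw then Glab sw 3 u - Glab sw 2 u else Glab sw 2 u - Glab sw 3 u)"
  "u 4 = Glab sw 0 u"
  by (cases sw; simp add: Glab_def algebra_simps)+

lemma mlab_eqs:
  assumes "\<forall>i<5. mv5 (M_lab a b) u i = m * u i"
  shows "(1-2*b-3/2*a)*u 0 + 2*b*u 1 + 3/sqrt 2*a*u 2 = m * u 0"
    "2*b*u 0 + (1-2*b-3/2*a)*u 1 + 3/sqrt 2*a*u 3 = m * u 1"
    "3/sqrt 2*a*u 0 + (1-2*b-3*a)*u 2 + 2*b*u 3 = m * u 2"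
    "3/sqrt 2*a*u 1 + 2*b*u 2 + (1-2*b-3*a)*u 3 = m * u 3"
    "u 4 = m * u 4"
  using assms[rule_format, of 0] assms[rule_format, of 1] assms[rule_format, of 2]
    assms[rule_format, of 3] assms[rule_format, of 4]
  by (simp_all add: mv5_def sum5 M_lab_def numeral_eq_Suc)

lemma lab_eig_gen:
  fixes s a b m :: real and u :: "nat \<Rightarrow> real"
  assumes "s*s = 2" "s > 0"
   and e: "(1-2*b-3/2*a)*u 0 + 2*b*u 1 + 3/s*a*u 2 = m * u 0"
    "2*b*u 0 + (1-2*b-3/2*a)*u 1 + 3/s*a*u 3 = m * u 1"
    "3/s*a*u 0 + (1-2*b-3*a)*u 2 + 2*b*u 3 = m * u 2"
    "3/s*a*u 1 + 2*b*u 2 + (1-2*b-3*a)*u 3 = m * u 3"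
  shows "(1 - m) * (2*(u 0 + u 1) + s*(u 2 + u 3)) = 0"
    "(2 - 9*a - 2*m) * ((u 0 + u 1) - s*(u 2 + u 3)) = 0"
    "(1 - 4*b - m) * (2*(u 0 - u 1) + s*(u 2 - u 3)) = 0"
    "(2 - 8*b - 9*a - 2*m) * ((u 0 - u 1) - s*(u 2 - u 3)) = 0"
proof -
  have "s \<noteq> 0" using assms by auto
  have e': "s*(2*(1-2*b)*u 0 - 3*a*u 0 + 4*b*u 1) + 6*a*u 2 = 2*s*m * u 0"
    "s*(4*b*u 0 + 2*(1-2*b)*u 1 - 3*a*u 1) + 6*a*u 3 = 2*s*m * u 1"
    "3*a*u 0 + s*((1-2*b-3*a)*u 2 + 2*b*u 3) = s*m * u 2"
    "3*a*u 1 + s*(2*b*u 2 + (1-2*b-3*a)*u 3) = s*m * u 3"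
    using e \<open>s \<noteq> 0\<close> by (simp_all add: field_simps)
  show "(1 - m) * (2*(u 0 + u 1) + s*(u 2 + u 3)) = 0"
    "(2 - 9*a - 2*m) * ((u 0 + u 1) - s*(u 2 + u 3)) = 0"
    "(1 - 4*b - m) * (2*(u 0 - u 1) + s*(u 2 - u 3)) = 0"
    "(2 - 8*b - 9*a - 2*m) * ((u 0 - u 1) - s*(u 2 - u 3)) = 0"
    using e' assms(1) by algebra+
qed

lemma lab_eig:
  assumes "\<forall>i<5. mv5 (M_lab a b) u i = m * u i" "j < 5"
  shows "(nulab a b sw j - m) * Flab sw j u = 0"
proof -
  note e = mlab_eqs[OF assms(1)]
  have s2: "sqrt 2 * sqrt 2 = (2::real)" and sp: "sqrt 2 > (0::real)" by simp_all
  note k = lab_eig_gen[of "sqrt 2" b a u m, OF s2 sp e(1-4)]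
  have k': "(1 - 9/2*a - m) = 0 \<or> ((u 0 + u 1) - sqrt 2*(u 2 + u 3)) = 0"
    "(1 - 4*b - 9/2*a - m) = 0 \<or> ((u 0 - u 1) - sqrt 2*(u 2 - u 3)) = 0"
    "1 - m = 0 \<or> 2*(u 0 + u 1) + sqrt 2*(u 2 + u 3) = 0"
    "1 - 4*b - m = 0 \<or> 2*(u 0 - u 1) + sqrt 2*(u 2 - u 3) = 0"
    "1 - m = 0 \<or> u 4 = 0"
    using k e(5) unfolding mult_eq_0_iff by auto
  have "(nulab a b sw j - m) = 0 \<or> Glab sw j u = 0"
    using assms(2) k' unfolding less5
    by (elim disjE; cases sw) (simp_all add: nulab_def Glab_def)
  hence "(nulab a b sw j - m) * Glab sw j u = 0" by simp
  thus ?thesis unfolding Flab_def by (simp add: algebra_simps)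
qed




lemma Flab_zero: "Flab sw j u = 0 \<Longrightarrow> Glab sw j u = 0"
  by (simp add: Flab_def wlab_def split: if_splits)

lemma lab_sep:
  assumes "0<a" "a<2/9" "0<b" "b<1/4" "9/8*a \<noteq> b" "top3_eig (M_lab a b) V lam"
  shows "separability (D_lab a b) V lam = C_lab a b * ((1-b-3/4*a)^2/2 *
     (1/3 + (if b < 9/8*a then (1-4*b)*(1/3) else (1-9/2*a)*(1/6))) + 1)"
proof -
  define sw where "sw = (b < 9/8*a)"
  have nu: "nulab a b sw 0 = 1" "nulab a b sw 1 = 1" "nulab a b sw 2 < 1"
     "nulab a b sw 3 < nulab a b sw 2" "nulab a b sw 4 < nulab a b sw 3"
    using assms(1-5) by (auto simp: nulab_def sw_def)
  obtain U where
    VU: "\<forall>k<3. \<forall>i<5. V i k = U k i" and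
    R: "lam 0 = 1 \<and> lam 1 = 1 \<and> lam 2 = nulab a b sw 2 \<and>
    Flab sw 2 (U 0) = 0 \<and> Flab sw 3 (U 0) = 0 \<and> Flab sw 4 (U 0) = 0 \<and>
    Flab sw 2 (U 1) = 0 \<and> Flab sw 3 (U 1) = 0 \<and> Flab sw 4 (U 1) = 0 \<and>
    Flab sw 0 (U 2) = 0 \<and> Flab sw 1 (U 2) = 0 \<and> Flab sw 3 (U 2) = 0 \<and> Flab sw 4 (U 2) = 0 \<and>
    (Flab sw 2 (U 2))^2 = 1 \<and> (Flab sw 1 (U 0))^2 + (Flab sw 1 (U 1))^2 = 1 \<and> (Flab sw 0 (U 0))^2 + (Flab sw 0 (U 1))^2 = 1 \<and>
    Flab sw 0 (U 0) * Flab sw 1 (U 0) + Flab sw 0 (U 1) * Flab sw 1 (U 1) = 0"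
    using from_top3[OF assms(6) lab_dot lab_eig nu] by blast
  have Z: "Glab sw 2 (U 0) = 0" "Glab sw 3 (U 0) = 0" "Glab sw 4 (U 0) = 0"
    "Glab sw 2 (U 1) = 0" "Glab sw 3 (U 1) = 0" "Glab sw 4 (U 1) = 0"
    "Glab sw 0 (U 2) = 0" "Glab sw 1 (U 2) = 0" "Glab sw 3 (U 2) = 0" "Glab sw 4 (U 2) = 0"
    using R Flab_zero by blast+
  have n0: "0 \<le> nulab a b sw 2" using assms(1-5) by (auto simp: nulab_def sw_def)
  define r where "r = sqrt (1/12::real)"
  define q where "q = sqrt (1/6::real)"
  have rr: "r*r = 1/12" and qq: "q*q = 1/6" unfolding r_def q_def by simp_all
  have F1: "Flab sw 1 u = r * Glab sw 1 u" for u by (simp add: Flab_def wlab_def r_def)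
  have F0: "Flab sw 0 u = Glab sw 0 u" for u by (simp add: Flab_def wlab_def)
  have F2: "Flab sw 2 u = (if sw then r else q) * Glab sw 2 u" for u
    by (simp add: Flab_def wlab_def r_def q_def)
  have inv0: "6 * U k 0 = Glab sw 1 (U k)" "6 * U k 1 = Glab sw 1 (U k)" "U k 4 = Glab sw 0 (U k)" if "k < 2" for k
    using lab_inv[where sw=sw and u="U k"] Z that by (auto simp: less_2_cases_iff)
  have inv2: "6 * U 2 0 = Glab sw 2 (U 2)" "6 * U 2 1 = (if sw then - Glab sw 2 (U 2) else Glab sw 2 (U 2))" "U 2 4 = 0"
    using lab_inv[where sw=sw and u="U 2"] Z by auto
  have "separability (D_lab a b) V lam =
     1/2*((D_lab a b 0)^2*((2*r)^2+nulab a b sw 2*(if sw then 2*r else q)^2) + (D_lab a b 1)^2*((2*r)^2+nulab a b sw 2*(if sw then -2*r else q)^2)) + (D_lab a b 4)^2"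
  proof (rule sep_formula[where x="\<lambda>k. Flab sw 1 (U k)" and y="\<lambda>k. Flab sw 0 (U k)" and z="Flab sw 2 (U 2)"])
    have v: "V 0 0 = U 0 0" "V 0 1 = U 1 0" "V 1 0 = U 0 1" "V 1 1 = U 1 1" "V 4 0 = U 0 4" "V 4 1 = U 1 4"
      "V 0 2 = U 2 0" "V 1 2 = U 2 1" "V 4 2 = U 2 4" using VU by auto
    show "V 0 0 = Flab sw 1 (U 0) * (2*r)" "V 0 1 = Flab sw 1 (U 1) * (2*r)"
      "V 1 0 = Flab sw 1 (U 0) * (2*r)" "V 1 1 = Flab sw 1 (U 1) * (2*r)"
    proof -
      have F1': "Flab sw 1 u * (2*r) = Glab sw 1 u / 6" for u
      proof -
        have "Flab sw 1 u * (2*r) = (r*r) * 2 * Glab sw 1 u" unfolding F1 by (simp add: mult_ac)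
        thus ?thesis using rr by simp
      qed
      show "V 0 0 = Flab sw 1 (U 0) * (2*r)" "V 0 1 = Flab sw 1 (U 1) * (2*r)"
        "V 1 0 = Flab sw 1 (U 0) * (2*r)" "V 1 1 = Flab sw 1 (U 1) * (2*r)"
        unfolding v F1' using inv0[of 0] inv0[of 1] by simp_all
    qed
    show "V 4 0 = Flab sw 0 (U 0)" "V 4 1 = Flab sw 0 (U 1)"
      unfolding v F0 using inv0[of 0] inv0[of 1] by simp_all
    show "V 0 2 = Flab sw 2 (U 2) * (if sw then 2*r else q)"
      "V 1 2 = Flab sw 2 (U 2) * (if sw then -2*r else q)" "V 4 2 = 0"
    proof -
      have rX: "r*(r*X) = X/12" and qX: "q*(q*X) = X/6" for X
        using rr qq by (simp_all add: mult.assoc[symmetric])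
      show "V 0 2 = Flab sw 2 (U 2) * (if sw then 2*r else q)"
        "V 1 2 = Flab sw 2 (U 2) * (if sw then -2*r else q)" "V 4 2 = 0"
        unfolding v F2 using inv2 by (auto simp: algebra_simps rX qX)
    qed
  qed (use R n0 in \<open>auto simp: mult.commute\<close>)
  also have "\<dots> = C_lab a b * ((1-b-3/4*a)^2/2 *
     (1/3 + (if b < 9/8*a then (1-4*b)*(1/3) else (1-9/2*a)*(1/6))) + 1)"
  proof -
    have C: "0 \<le> C_lab a b" using assms by (simp add: C_lab_def)
    have DD: "(D_lab a b 0)^2 = C_lab a b * (1-b-3/4*a)^2/2" "(D_lab a b 1)^2 = C_lab a b * (1-b-3/4*a)^2/2"
      "(D_lab a b 4)^2 = C_lab a b"
      using C by (simp_all add: D_lab_def power_mult_distrib power_divide)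
    have p: "(2*r)^2 = 1/3" "(-2*r)^2 = 1/3" "q^2 = 1/6" "r^2 = 1/12" using rr qq by (simp_all add: power2_eq_square)
    show ?thesis unfolding DD sw_def[symmetric] by (cases sw) (simp_all add: p nulab_def field_simps)
  qed
  finally show ?thesis .
qed



lemma mb3: fixes a b A B c :: real assumes "0<a" "a<A" "0<b" "b<B" "A^i*B^j = c"
  shows "0 \<le> a^i*b^j \<and> a^i*b^j \<le> c"
  using assms by (auto simp: mult_mono power_mono less_imp_le)

lemma ineq1: fixes a b :: real assumes "0<a" "a<2/9" "0<b" "b<1/4"
  shows "(7+12*b+12*a)*((1-b-3/4*a)^2/2*(1/3 + (1-4*b)*(1/3)) + 1) - (5+8*b+8*a)*((1-a-b)^2*(2-4*b)/4+1) > 0"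
proof -
  have e: "(7+12*b+12*a)*((1-b-3/4*a)^2/2*(1/3 + (1-4*b)*(1/3)) + 1) - (5+8*b+8*a)*((1-a-b)^2*(2-4*b)/4+1) = (11/6) + (14/3)*(a^0*b^1) + (-5/6)*(a^0*b^2) + (1/3)*(a^0*b^3) + (11/2)*(a^1*b^0) + (-5/2)*(a^1*b^1) + (-3)*(a^1*b^2) + (4)*(a^1*b^3) + (13/16)*(a^2*b^0) + (-43/8)*(a^2*b^1) + (15/2)*(a^2*b^2) + (-7/4)*(a^3*b^0) + (7/2)*(a^3*b^1)"
    by (simp add: field_simps power2_eq_square power3_eq_cube power4_eq_xxxx)
  have f0: "0 \<le> a^0*b^1 \<and> a^0*b^1 \<le> 1/4" by (rule mb3[OF assms(1-4)]) (simp add: power_divide)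
  have f1: "0 \<le> a^0*b^2 \<and> a^0*b^2 \<le> 1/16" by (rule mb3[OF assms(1-4)]) (simp add: power_divide)
  have f2: "0 \<le> a^0*b^3 \<and> a^0*b^3 \<le> 1/64" by (rule mb3[OF assms(1-4)]) (simp add: power_divide)
  have f3: "0 \<le> a^1*b^0 \<and> a^1*b^0 \<le> 2/9" by (rule mb3[OF assms(1-4)]) (simp add: power_divide)
  have f4: "0 \<le> a^1*b^1 \<and> a^1*b^1 \<le> 1/18" by (rule mb3[OF assms(1-4)]) (simp add: power_divide)
  have f5: "0 \<le> a^1*b^2 \<and> a^1*b^2 \<le> 1/72" by (rule mb3[OF assms(1-4)]) (simp add: power_divide)
  have f6: "0 \<le> a^1*b^3 \<and> a^1*b^3 \<le> 1/288" by (rule mb3[OF assms(1-4)]) (simp add: power_divide)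
  have f7: "0 \<le> a^2*b^0 \<and> a^2*b^0 \<le> 4/81" by (rule mb3[OF assms(1-4)]) (simp add: power_divide)
  have f8: "0 \<le> a^2*b^1 \<and> a^2*b^1 \<le> 1/81" by (rule mb3[OF assms(1-4)]) (simp add: power_divide)
  have f9: "0 \<le> a^2*b^2 \<and> a^2*b^2 \<le> 1/324" by (rule mb3[OF assms(1-4)]) (simp add: power_divide)
  have f10: "0 \<le> a^3*b^0 \<and> a^3*b^0 \<le> 8/729" by (rule mb3[OF assms(1-4)]) (simp add: power_divide)
  have f11: "0 \<le> a^3*b^1 \<and> a^3*b^1 \<le> 2/729" by (rule mb3[OF assms(1-4)]) (simp add: power_divide)
  have P: "(11/6) + (14/3)*(a^0*b^1) + (-5/6)*(a^0*b^2) + (1/3)*(a^0*b^3) + (11/2)*(a^1*b^0) + (-5/2)*(a^1*b^1) + (-3)*(a^1*b^2) + (4)*(a^1*b^3) + (13/16)*(a^2*b^0) + (-43/8)*(a^2*b^1) + (15/2)*(a^2*b^2) + (-7/4)*(a^3*b^0) + (7/2)*(a^3*b^1) > 0"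
    using f0 f1 f2 f3 f4 f5 f6 f7 f8 f9 f10 f11 by linarith
  show ?thesis unfolding e by (rule P)
qed
lemma ineq2: fixes a b :: real assumes "0<a" "a<2/9" "0<b" "b<1/4"
  shows "(7+12*b+12*a)*((1-b-3/4*a)^2/2*(1/3 + (1-4*b)*(1/3)) + 1) - (5+8*b+8*a)*((1-a-b)^2*(2-4*a)/4+1) > 0"
proof -
  have e: "(7+12*b+12*a)*((1-b-3/4*a)^2/2*(1/3 + (1-4*b)*(1/3)) + 1) - (5+8*b+8*a)*((1-a-b)^2*(2-4*a)/4+1) = (11/6) + (-1/3)*(a^0*b^1) + (7/6)*(a^0*b^2) + (34/3)*(a^0*b^3) + (-8)*(a^0*b^4) + (21/2)*(a^1*b^0) + (-5/2)*(a^1*b^1) + (8)*(a^1*b^2) + (-12)*(a^1*b^3) + (-19/16)*(a^2*b^0) + (-131/8)*(a^2*b^1) + (15/2)*(a^2*b^2) + (-51/4)*(a^3*b^0) + (39/2)*(a^3*b^1) + (8)*(a^4*b^0)"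
    by (simp add: field_simps power2_eq_square power3_eq_cube power4_eq_xxxx)
  have f0: "0 \<le> a^0*b^1 \<and> a^0*b^1 \<le> 1/4" by (rule mb3[OF assms(1-4)]) (simp add: power_divide)
  have f1: "0 \<le> a^0*b^2 \<and> a^0*b^2 \<le> 1/16" by (rule mb3[OF assms(1-4)]) (simp add: power_divide)
  have f2: "0 \<le> a^0*b^3 \<and> a^0*b^3 \<le> 1/64" by (rule mb3[OF assms(1-4)]) (simp add: power_divide)
  have f3: "0 \<le> a^0*b^4 \<and> a^0*b^4 \<le> 1/256" by (rule mb3[OF assms(1-4)]) (simp add: power_divide)
  have f4: "0 \<le> a^1*b^0 \<and> a^1*b^0 \<le> 2/9" by (rule mb3[OF assms(1-4)]) (simp add: power_divide)
  have f5: "0 \<le> a^1*b^1 \<and> a^1*b^1 \<le> 1/18" by (rule mb3[OF assms(1-4)]) (simp add: power_divide)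
  have f6: "0 \<le> a^1*b^2 \<and> a^1*b^2 \<le> 1/72" by (rule mb3[OF assms(1-4)]) (simp add: power_divide)
  have f7: "0 \<le> a^1*b^3 \<and> a^1*b^3 \<le> 1/288" by (rule mb3[OF assms(1-4)]) (simp add: power_divide)
  have f8: "0 \<le> a^2*b^0 \<and> a^2*b^0 \<le> 4/81" by (rule mb3[OF assms(1-4)]) (simp add: power_divide)
  have f9: "0 \<le> a^2*b^1 \<and> a^2*b^1 \<le> 1/81" by (rule mb3[OF assms(1-4)]) (simp add: power_divide)
  have f10: "0 \<le> a^2*b^2 \<and> a^2*b^2 \<le> 1/324" by (rule mb3[OF assms(1-4)]) (simp add: power_divide)
  have f11: "0 \<le> a^3*b^0 \<and> a^3*b^0 \<le> 8/729" by (rule mb3[OF assms(1-4)]) (simp add: power_divide)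
  have f12: "0 \<le> a^3*b^1 \<and> a^3*b^1 \<le> 2/729" by (rule mb3[OF assms(1-4)]) (simp add: power_divide)
  have f13: "0 \<le> a^4*b^0 \<and> a^4*b^0 \<le> 16/6561" by (rule mb3[OF assms(1-4)]) (simp add: power_divide)
  have P: "(11/6) + (-1/3)*(a^0*b^1) + (7/6)*(a^0*b^2) + (34/3)*(a^0*b^3) + (-8)*(a^0*b^4) + (21/2)*(a^1*b^0) + (-5/2)*(a^1*b^1) + (8)*(a^1*b^2) + (-12)*(a^1*b^3) + (-19/16)*(a^2*b^0) + (-131/8)*(a^2*b^1) + (15/2)*(a^2*b^2) + (-51/4)*(a^3*b^0) + (39/2)*(a^3*b^1) + (8)*(a^4*b^0) > 0"
    using f0 f1 f2 f3 f4 f5 f6 f7 f8 f9 f10 f11 f12 f13 by linarith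
  show ?thesis unfolding e by (rule P)
qed
lemma ineq3: fixes a b :: real assumes "0<a" "a<2/9" "0<b" "b<1/4"
  shows "(7+12*b+12*a)*((1-b-3/4*a)^2/2*(1/3 + (1-9/2*a)*(1/6)) + 1) - (5+8*b+8*a)*((1-a-b)^2*(2-4*a)/4+1) > 0"
proof -
  have e: "(7+12*b+12*a)*((1-b-3/4*a)^2/2*(1/3 + (1-9/2*a)*(1/6)) + 1) - (5+8*b+8*a)*((1-a-b)^2*(2-4*a)/4+1) = (5/4) + (9/2)*(a^0*b^1) + (5/4)*(a^0*b^2) + (-1)*(a^0*b^3) + (31/4)*(a^1*b^0) + (15/8)*(a^1*b^1) + (-73/8)*(a^1*b^2) + (7/2)*(a^1*b^3) + (-37/64)*(a^2*b^0) + (-16)*(a^2*b^1) + (51/4)*(a^2*b^2) + (-1029/128)*(a^3*b^0) + (471/32)*(a^3*b^1) + (175/32)*(a^4*b^0)"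
    by (simp add: field_simps power2_eq_square power3_eq_cube power4_eq_xxxx)
  have f0: "0 \<le> a^0*b^1 \<and> a^0*b^1 \<le> 1/4" by (rule mb3[OF assms(1-4)]) (simp add: power_divide)
  have f1: "0 \<le> a^0*b^2 \<and> a^0*b^2 \<le> 1/16" by (rule mb3[OF assms(1-4)]) (simp add: power_divide)
  have f2: "0 \<le> a^0*b^3 \<and> a^0*b^3 \<le> 1/64" by (rule mb3[OF assms(1-4)]) (simp add: power_divide)
  have f3: "0 \<le> a^1*b^0 \<and> a^1*b^0 \<le> 2/9" by (rule mb3[OF assms(1-4)]) (simp add: power_divide)
  have f4: "0 \<le> a^1*b^1 \<and> a^1*b^1 \<le> 1/18" by (rule mb3[OF assms(1-4)]) (simp add: power_divide)
  have f5: "0 \<le> a^1*b^2 \<and> a^1*b^2 \<le> 1/72" by (rule mb3[OF assms(1-4)]) (simp add: power_divide)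
  have f6: "0 \<le> a^1*b^3 \<and> a^1*b^3 \<le> 1/288" by (rule mb3[OF assms(1-4)]) (simp add: power_divide)
  have f7: "0 \<le> a^2*b^0 \<and> a^2*b^0 \<le> 4/81" by (rule mb3[OF assms(1-4)]) (simp add: power_divide)
  have f8: "0 \<le> a^2*b^1 \<and> a^2*b^1 \<le> 1/81" by (rule mb3[OF assms(1-4)]) (simp add: power_divide)
  have f9: "0 \<le> a^2*b^2 \<and> a^2*b^2 \<le> 1/324" by (rule mb3[OF assms(1-4)]) (simp add: power_divide)
  have f10: "0 \<le> a^3*b^0 \<and> a^3*b^0 \<le> 8/729" by (rule mb3[OF assms(1-4)]) (simp add: power_divide)
  have f11: "0 \<le> a^3*b^1 \<and> a^3*b^1 \<le> 2/729" by (rule mb3[OF assms(1-4)]) (simp add: power_divide)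
  have f12: "0 \<le> a^4*b^0 \<and> a^4*b^0 \<le> 16/6561" by (rule mb3[OF assms(1-4)]) (simp add: power_divide)
  have P: "(5/4) + (9/2)*(a^0*b^1) + (5/4)*(a^0*b^2) + (-1)*(a^0*b^3) + (31/4)*(a^1*b^0) + (15/8)*(a^1*b^1) + (-73/8)*(a^1*b^2) + (7/2)*(a^1*b^3) + (-37/64)*(a^2*b^0) + (-16)*(a^2*b^1) + (51/4)*(a^2*b^2) + (-1029/128)*(a^3*b^0) + (471/32)*(a^3*b^1) + (175/32)*(a^4*b^0) > 0"
    using f0 f1 f2 f3 f4 f5 f6 f7 f8 f9 f10 f11 f12 by linarith
  show ?thesis unfolding e by (rule P)
qed


theorem theorem7:
  fixes a b :: real
  assumes "0 < a" "a < 2/9" "0 < b" "b < 1/4" "9/8*a \<noteq> b" "a \<noteq> b"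
  shows "\<forall>V lam Vu lamu.
           top3_eig (M_lab a b) V lam \<longrightarrow> top3_eig (M_self a b) Vu lamu \<longrightarrow>
           separability (D_lab a b) V lam - separability (D_self a b) Vu lamu > 0"
proof (intro allI impI)
  fix V lam Vu lamu
  assume h1: "top3_eig (M_lab a b) V lam" and h2: "top3_eig (M_self a b) Vu lamu"
  have a4: "a < 1/4" using assms by simp
  note SL = lab_sep[OF assms(1-5) h1]
  note SS = self_sep[OF assms(1) a4 assms(3,4,6) h2]
  consider (c1) "b < 9/8*a" "b < a" | (c2) "b < 9/8*a" "a < b" | (c3) "9/8*a < b"
    using assms(5,6) by linarith
  then show "separability (D_lab a b) V lam - separability (D_self a b) Vu lamu > 0"
  proof cases
    case c1
    have "separability (D_lab a b) V lam - separability (D_self a b) Vu lamu = (7+12*b+12*a)*((1-b-3/4*a)^2/2*(1/3 + (1-4*b)*(1/3)) + 1) - (5+8*b+8*a)*((1-a-b)^2*(2-4*b)/4+1)"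
      unfolding SL SS using c1 by (simp add: C_lab_def C_self_def min_def)
    thus ?thesis using ineq1[OF assms(1-4)] by simp
  next
    case c2
    have "separability (D_lab a b) V lam - separability (D_self a b) Vu lamu = (7+12*b+12*a)*((1-b-3/4*a)^2/2*(1/3 + (1-4*b)*(1/3)) + 1) - (5+8*b+8*a)*((1-a-b)^2*(2-4*a)/4+1)"
      unfolding SL SS using c2 by (simp add: C_lab_def C_self_def min_def)
    thus ?thesis using ineq2[OF assms(1-4)] by simp
  next
    case c3
    have "a < b" using c3 assms(1) by linarith
    have "separability (D_lab a b) V lam - separability (D_self a b) Vu lamu = (7+12*b+12*a)*((1-b-3/4*a)^2/2*(1/3 + (1-9/2*a)*(1/6)) + 1) - (5+8*b+8*a)*((1-a-b)^2*(2-4*a)/4+1)"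
      unfolding SL SS using c3 \<open>a < b\<close> by (simp add: C_lab_def C_self_def min_def)
    thus ?thesis using ineq3[OF assms(1-4)] by simp
  qed
qed

end
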